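(* Let $G$ be a graph and $s:V(G)\to\mathbb{N}$ a function. Suppose that every correspondence-cover $(L^-,H^-)$ of $G$ with $|L^-(v)|=s(v)$ for all $v\in V(G)$ has a fractional packing. Then every correspondence-cover $(L,H)$ of $G$ with $|L(v)|\geq s(v)$ for all $v$ has a fractional packing. The same statement holds with "correspondence-cover" replaced by "list-cover" throughout. In particular, every correspondence-cover $(L,H)$ of $G$ with $|L(v)|\ge \chi_c^\bullet(G)$ for all $v$ has a fractional packing.
   Context: All graphs are finite and simple. A correspondence-cover of a graph $G$ is a pair $(L,H)$ where $H$ is a graph and $L$ maps each $v\in V(G)$ to a subset $L(v)\subseteq V(H)$ such that: the sets $L(v)$ partition $V(H)$; each $L(v)$ induces a clique in $H$; if $uv\notin E(G)$ there are no edges of $H$ between $L(u)$ and $L(v)$; if $uv\in E(G)$ the edges of $H$ between $L(u)$ and $L(v)$ form a matching. A list-cover is the correspondence-cover arising from a list-assignment $v\mapsto L(v)\subseteq\mathbb{N}$: vertices $(v,x)$ with $x\in L(v)$, cliques on each list, and edges $(u,x)(v,x)$ for every $uv\in E(G)$ and common color $x$. An independent transversal of $(L,H)$ is an independent set of $H$ containing exactly one vertex of each $L(v)$. A cover has a fractional packing if there is a probability distribution on independent transversals $I$ such that $\Pr(x\in I)=1/|L(v)|$ for every $v$ and every $x\in L(v)$ (lists need not all have the same size). $\chi_c^{\bullet}(G)$ is the least $k\ge1$ such that every correspondence-cover with all lists of size $k$ has a fractional packing. *)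

theory Defs
  imports "HOL-Probability.Probability_Mass_Function"
begin

definition graph :: "'v set \<Rightarrow> ('v \<Rightarrow> 'v \<Rightarrow> bool) \<Rightarrow> bool" where
  "graph V E \<longleftrightarrow> finite V \<and>
     (\<forall>u v. E u v \<longrightarrow> u \<in> V \<and> v \<in> V \<and> u \<noteq> v \<and> E v u)"

definition corr_cover ::
  "'v set \<Rightarrow> ('v \<Rightarrow> 'v \<Rightarrow> bool) \<Rightarrow> ('v \<Rightarrow> 'h set) \<Rightarrow> 'h set \<Rightarrow> ('h \<Rightarrow> 'h \<Rightarrow> bool) \<Rightarrow> bool" where
  "corr_cover V E L VH EH \<longleftrightarrow>
     finite VH \<and>
     (\<forall>x y. EH x y \<longrightarrow> x \<in> VH \<and> y \<in> VH \<and> x \<noteq> y \<and> EH y x) \<and>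
     (\<Union>v\<in>V. L v) = VH \<and>
     (\<forall>u\<in>V. \<forall>v\<in>V. u \<noteq> v \<longrightarrow> L u \<inter> L v = {}) \<and>
     (\<forall>v\<in>V. \<forall>x\<in>L v. \<forall>y\<in>L v. x \<noteq> y \<longrightarrow> EH x y) \<and>
     (\<forall>u\<in>V. \<forall>v\<in>V. u \<noteq> v \<and> \<not> E u v \<longrightarrow> (\<forall>x\<in>L u. \<forall>y\<in>L v. \<not> EH x y)) \<and>
     (\<forall>u\<in>V. \<forall>v\<in>V. E u v \<longrightarrow>
        (\<forall>x\<in>L u. \<forall>y\<in>L v. \<forall>y'\<in>L v. EH x y \<and> EH x y' \<longrightarrow> y = y'))"

definition lc_L :: "('v \<Rightarrow> nat set) \<Rightarrow> 'v \<Rightarrow> ('v \<times> nat) set" where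
  "lc_L Lst v = {v} \<times> Lst v"

definition lc_V :: "'v set \<Rightarrow> ('v \<Rightarrow> nat set) \<Rightarrow> ('v \<times> nat) set" where
  "lc_V V Lst = {(v, x). v \<in> V \<and> x \<in> Lst v}"

definition lc_E :: "'v set \<Rightarrow> ('v \<Rightarrow> 'v \<Rightarrow> bool) \<Rightarrow> ('v \<Rightarrow> nat set)
    \<Rightarrow> ('v \<times> nat) \<Rightarrow> ('v \<times> nat) \<Rightarrow> bool" where
  "lc_E V E Lst p q \<longleftrightarrow> p \<in> lc_V V Lst \<and> q \<in> lc_V V Lst \<and>
     ((fst p = fst q \<and> snd p \<noteq> snd q) \<or> (E (fst p) (fst q) \<and> snd p = snd q))"

definition indep_transversal ::
  "'v set \<Rightarrow> ('v \<Rightarrow> 'h set) \<Rightarrow> 'h set \<Rightarrow> ('h \<Rightarrow> 'h \<Rightarrow> bool) \<Rightarrow> 'h set \<Rightarrow> bool" where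
  "indep_transversal V L VH EH I \<longleftrightarrow>
     I \<subseteq> VH \<and> (\<forall>x\<in>I. \<forall>y\<in>I. \<not> EH x y) \<and> (\<forall>v\<in>V. card (I \<inter> L v) = 1)"

definition has_frac_packing ::
  "'v set \<Rightarrow> ('v \<Rightarrow> 'h set) \<Rightarrow> 'h set \<Rightarrow> ('h \<Rightarrow> 'h \<Rightarrow> bool) \<Rightarrow> bool" where
  "has_frac_packing V L VH EH \<longleftrightarrow>
     (\<exists>p :: 'h set pmf.
        (\<forall>I\<in>set_pmf p. indep_transversal V L VH EH I) \<and>
        (\<forall>v\<in>V. \<forall>x\<in>L v. measure_pmf.prob p {I. x \<in> I} = 1 / real (card (L v))))"

text \<open>The fractional correspondence packing number. Covers are quantified with
  H-vertices of type nat (no loss: covers are finite, so every cover is isomorphic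
  to one on nat).\<close>
definition chi_c_bullet :: "'v set \<Rightarrow> ('v \<Rightarrow> 'v \<Rightarrow> bool) \<Rightarrow> nat" where
  "chi_c_bullet V E = (LEAST k. k \<ge> 1 \<and>
     (\<forall>(L :: 'v \<Rightarrow> nat set) VH EH. corr_cover V E L VH EH \<and> (\<forall>v\<in>V. card (L v) = k)
        \<longrightarrow> has_frac_packing V L VH EH))"

end

theory Submission imports Defs begin

lemma match_aux:
  fixes A :: "'a set" and bad :: "'a \<Rightarrow> nat \<Rightarrow> bool"
  assumes finA: "finite A" and cA: "card A = k" and dk: "2 * d < k"
    and b1: "\<forall>x\<in>A. card {j\<in>{..<k}. bad x j} \<le> d"
    and b2: "\<forall>j<k. card {x\<in>A. bad x j} \<le> d"
  shows "finite B \<Longrightarrow> B \<subseteq> A \<Longrightarrow> \<exists>\<sigma>. inj_on \<sigma> B \<and> \<sigma> ` B \<subseteq> {..<k} \<and> (\<forall>x\<in>B. \<not> bad x (\<sigma> x))"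
proof (induction B rule: finite_induct)
  case empty then show ?case by auto
next
  case (insert a B)
  then obtain \<sigma> where s: "inj_on \<sigma> B" "\<sigma> ` B \<subseteq> {..<k}" "\<forall>x\<in>B. \<not> bad x (\<sigma> x)" by auto
  have aA: "a \<in> A" using insert by auto
  have cB: "card B < k"
  proof -
    have "card (insert a B) \<le> card A" using insert.prems finA card_mono by blast
    then show ?thesis using insert.hyps cA by simp
  qed
  show ?case
  proof (cases "\<exists>j<k. j \<notin> \<sigma> ` B \<and> \<not> bad a j")
    case True
    then obtain j where j: "j < k" "j \<notin> \<sigma> ` B" "\<not> bad a j" by blast
    let ?t = "\<sigma>(a := j)"
    have e: "\<forall>x\<in>B. ?t x = \<sigma> x" using insert.hyps by auto
    have "inj_on ?t (insert a B)"
    proof -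
      have "inj_on ?t B" by (rule inj_on_fun_updI[OF s(1) j(2)])
      moreover have "?t ` B = \<sigma> ` B" using e by (auto intro: image_cong)
      moreover have "B - {a} = B" using insert.hyps by blast
      ultimately show ?thesis using j(2) by simp
    qed
    moreover have "?t ` insert a B \<subseteq> {..<k}" using j s(2) e by auto
    moreover have "\<forall>x\<in>insert a B. \<not> bad x (?t x)" using j s(3) e by auto
    ultimately show ?thesis by blast
  next
    case False
    define G where "G = {j\<in>{..<k}. \<not> bad a j}"
    have GB: "G \<subseteq> \<sigma> ` B" using False G_def by auto
    have cG: "card G \<ge> k - d"
    proof -
      have eq: "{..<k} = G \<union> {j\<in>{..<k}. bad a j}" unfolding G_def by auto
      have "card (G \<union> {j\<in>{..<k}. bad a j}) \<le> card G + card {j\<in>{..<k}. bad a j}"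
        by (rule card_Un_le)
      then have "k \<le> card G + card {j\<in>{..<k}. bad a j}" by (simp only: eq[symmetric] card_lessThan)
      moreover have "card {j\<in>{..<k}. bad a j} \<le> d" using b1 aA by blast
      ultimately show ?thesis by linarith
    qed
    define S where "S = {b\<in>B. \<not> bad a (\<sigma> b)}"
    have "G \<subseteq> \<sigma> ` S" using GB unfolding S_def G_def by auto
    then have "card G \<le> card (\<sigma> ` S)" using insert.hyps(1) S_def by (intro card_mono) auto
    also have "\<dots> \<le> card S" by (rule card_image_le) (use insert.hyps(1) S_def in auto)
    finally have cS: "card S \<ge> k - d" using cG by linarith
    have "\<sigma> ` B \<noteq> {..<k}"
    proof
      assume "\<sigma> ` B = {..<k}"
      then have "card (\<sigma> ` B) = k" by simp
      moreover have "card (\<sigma> ` B) = card B" using s(1) by (rule card_image)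
      ultimately show False using cB by simp
    qed
    then obtain j0 where j0: "j0 < k" "j0 \<notin> \<sigma> ` B" using s(2) by blast
    define T where "T = {x\<in>A. bad x j0}"
    have cT: "card T \<le> d" using b2 j0 T_def by auto
    have "\<not> S \<subseteq> T"
    proof
      assume "S \<subseteq> T"
      then have "card S \<le> card T" using finA T_def by (intro card_mono) auto
      then show False using cS cT dk by linarith
    qed
    then obtain b where b: "b \<in> B" "\<not> bad a (\<sigma> b)" "\<not> bad b j0"
      unfolding S_def T_def using insert.prems by auto
    have ab: "a \<noteq> b" using b insert.hyps by auto
    let ?t = "\<sigma>(b := j0, a := \<sigma> b)"
    have t1: "?t a = \<sigma> b" "?t b = j0" using ab by auto
    have t2: "\<forall>x\<in>B - {b}. ?t x = \<sigma> x" using insert.hyps by auto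
    have bj: "\<sigma> b \<noteq> j0" using j0 b by auto
    have "inj_on ?t (insert a B)"
    proof -
      have i1: "inj_on (\<sigma>(b := j0)) B" by (rule inj_on_fun_updI[OF s(1) j0(2)])
      have e2: "\<And>z. z \<in> B \<Longrightarrow> ?t z = (\<sigma>(b := j0)) z" using insert.hyps by auto
      have i2: "inj_on ?t B" using i1 inj_on_cong[of B ?t "\<sigma>(b := j0)", OF e2] by blast
      have "?t a \<notin> ?t ` B"
      proof
        assume "?t a \<in> ?t ` B"
        then obtain z where z: "z \<in> B" "?t a = ?t z" by blast
        show False
        proof (cases "z = b")
          case True then show False using z t1 bj by simp
        next
          case False
          then have "\<sigma> z = \<sigma> b" using z t1 e2 by simp
          then have "z = b" by (rule inj_onD[OF s(1) _ z(1) b(1)])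
          then show False using False by simp
        qed
      qed
      moreover have "B - {a} = B" using insert.hyps by blast
      ultimately show ?thesis using i2 by simp
    qed
    moreover have "?t ` insert a B \<subseteq> {..<k}"
    proof -
      have "\<sigma> b < k" using s(2) b by auto
      moreover have "\<forall>x\<in>B - {b}. \<sigma> x < k" using s(2) by auto
      ultimately show ?thesis using t1 t2 j0 by auto
    qed
    moreover have "\<forall>x\<in>insert a B. \<not> bad x (?t x)"
      using t1 t2 b s(3) by auto
    ultimately show ?thesis by blast
  qed
qed

lemma match_lemma:
  fixes A :: "'a set" and bad :: "'a \<Rightarrow> nat \<Rightarrow> bool"
  assumes "finite A" "card A = k" "2 * d < k"
    "\<forall>x\<in>A. card {j\<in>{..<k}. bad x j} \<le> d"
    "\<forall>j<k. card {x\<in>A. bad x j} \<le> d"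
  shows "\<exists>\<sigma>. inj_on \<sigma> A \<and> \<sigma> ` A \<subseteq> {..<k} \<and> (\<forall>x\<in>A. \<not> bad x (\<sigma> x))"
  using match_aux[OF assms, of A] assms(1) by blast


lemma cc1: "corr_cover V E L VH EH \<Longrightarrow> finite VH"
  unfolding corr_cover_def by (elim conjE) assumption
lemma cc2: "corr_cover V E L VH EH \<Longrightarrow> \<forall>x y. EH x y \<longrightarrow> x \<in> VH \<and> y \<in> VH \<and> x \<noteq> y \<and> EH y x"
  unfolding corr_cover_def by (elim conjE) assumption
lemma cc3: "corr_cover V E L VH EH \<Longrightarrow> (\<Union>v\<in>V. L v) = VH"
  unfolding corr_cover_def by (elim conjE) assumption
lemma cc4: "corr_cover V E L VH EH \<Longrightarrow> \<forall>u\<in>V. \<forall>v\<in>V. u \<noteq> v \<longrightarrow> L u \<inter> L v = {}"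
  unfolding corr_cover_def by (elim conjE) assumption
lemma cc5: "corr_cover V E L VH EH \<Longrightarrow> \<forall>v\<in>V. \<forall>x\<in>L v. \<forall>y\<in>L v. x \<noteq> y \<longrightarrow> EH x y"
  unfolding corr_cover_def by (elim conjE) assumption
lemma cc6: "corr_cover V E L VH EH \<Longrightarrow> \<forall>u\<in>V. \<forall>v\<in>V. u \<noteq> v \<and> \<not> E u v \<longrightarrow> (\<forall>x\<in>L u. \<forall>y\<in>L v. \<not> EH x y)"
  unfolding corr_cover_def by (elim conjE) assumption
lemma cc7: "corr_cover V E L VH EH \<Longrightarrow> \<forall>u\<in>V. \<forall>v\<in>V. E u v \<longrightarrow>
        (\<forall>x\<in>L u. \<forall>y\<in>L v. \<forall>y'\<in>L v. EH x y \<and> EH x y' \<longrightarrow> y = y')"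
  unfolding corr_cover_def by (elim conjE) assumption
lemma cc4': "corr_cover V E L VH EH \<Longrightarrow> u \<in> V \<Longrightarrow> v \<in> V \<Longrightarrow> u \<noteq> v \<Longrightarrow> L u \<inter> L v = {}"
  using cc4 by blast
lemma ccL: "corr_cover V E L VH EH \<Longrightarrow> v \<in> V \<Longrightarrow> L v \<subseteq> VH"
  using cc3 by blast
lemma ccLf: "corr_cover V E L VH EH \<Longrightarrow> v \<in> V \<Longrightarrow> finite (L v)"
  using ccL cc1 finite_subset by metis

lemma edge_E:
  assumes c: "corr_cover V E L VH EH" and "u \<in> V" "v \<in> V" "u \<noteq> v" "x \<in> L u" "y \<in> L v" "EH x y"
  shows "E u v"
proof (rule ccontr)
  assume "\<not> E u v"
  then have "\<not> EH x y" using cc6[OF c, rule_format, of u v x y] assms(2-6) by blast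
  then show False using assms(7) by blast
qed

lemma one_nb:
  assumes c: "corr_cover V E L VH EH" and "u \<in> V" "v \<in> V" "u \<noteq> v" "x \<in> L u"
  shows "card {y\<in>L v. EH x y} \<le> 1"
proof -
  have f: "finite {y\<in>L v. EH x y}" using ccLf[OF c assms(3)] by simp
  have "\<forall>y\<in>{y\<in>L v. EH x y}. \<forall>y'\<in>{y\<in>L v. EH x y}. y = y'"
  proof (intro ballI)
    fix y y' assume y: "y \<in> {y\<in>L v. EH x y}" and y': "y' \<in> {y\<in>L v. EH x y}"
    have yy: "y \<in> L v" "EH x y" "y' \<in> L v" "EH x y'" using y y' by auto
    have "E u v" by (rule edge_E[OF c assms(2-5) yy(1,2)])
    then show "y = y'" using cc7[OF c, rule_format, of u v x y y'] assms(2,3,5) yy by blast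
  qed
  then show ?thesis using card_le_Suc0_iff_eq[OF f] by simp
qed

lemma coloring_aux:
  assumes c: "corr_cover V E L VH EH" and finV: "finite V"
    and kL: "\<forall>v\<in>V. card (L v) = k" and dk: "2 * card V < k"
  shows "finite W \<Longrightarrow> W \<subseteq> V \<Longrightarrow> \<exists>col. (\<forall>v\<in>W. inj_on col (L v) \<and> col ` L v \<subseteq> {..<k}) \<and>
           (\<forall>x\<in>\<Union>(L ` W). \<forall>y\<in>\<Union>(L ` W). EH x y \<longrightarrow> col x \<noteq> col y)"
proof (induction W rule: finite_induct)
  case empty then show ?case by auto
next
  case (insert v W)
  have vV: "v \<in> V" and WV: "W \<subseteq> V" using insert.prems by auto
  obtain col where col: "\<forall>u\<in>W. inj_on col (L u) \<and> col ` L u \<subseteq> {..<k}"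
      "\<forall>x\<in>\<Union>(L ` W). \<forall>y\<in>\<Union>(L ` W). EH x y \<longrightarrow> col x \<noteq> col y"
    using insert.IH WV by blast
  define U where "U = \<Union>(L ` W)"
  define bad where "bad = (\<lambda>x j. \<exists>y\<in>U. EH x y \<and> col y = j)"
  have finLv: "finite (L v)" by (rule ccLf[OF c vV])
  have fVH: "finite VH" by (rule cc1[OF c])
  have cW: "card W \<le> card V" using WV finV by (rule card_mono[rotated])
  have b1: "\<forall>x\<in>L v. card {j\<in>{..<k}. bad x j} \<le> card V"
  proof
    fix x assume x: "x \<in> L v"
    have "{j\<in>{..<k}. bad x j} \<subseteq> col ` (\<Union>u\<in>W. {y\<in>L u. EH x y})"
      unfolding bad_def U_def by auto
    moreover have fin: "finite (\<Union>u\<in>W. {y\<in>L u. EH x y})"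
      using insert.hyps(1) ccLf[OF c] WV by auto
    ultimately have "card {j\<in>{..<k}. bad x j} \<le> card (col ` (\<Union>u\<in>W. {y\<in>L u. EH x y}))"
      by (intro card_mono) auto
    also have "\<dots> \<le> card (\<Union>u\<in>W. {y\<in>L u. EH x y})" by (rule card_image_le[OF fin])
    also have "\<dots> \<le> (\<Sum>u\<in>W. card {y\<in>L u. EH x y})" by (rule card_UN_le[OF insert.hyps(1)])
    also have "\<dots> \<le> (\<Sum>u\<in>W. 1)"
    proof (rule sum_mono)
      fix u assume u: "u \<in> W"
      then have "u \<noteq> v" using insert.hyps by auto
      then show "card {y\<in>L u. EH x y} \<le> 1" using one_nb[OF c vV _ _ x, of u] u WV by auto
    qed
    also have "\<dots> = card W" by simp
    finally show "card {j\<in>{..<k}. bad x j} \<le> card V" using cW by linarith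
  qed
  have b2: "\<forall>j<k. card {x\<in>L v. bad x j} \<le> card V"
  proof (intro allI impI)
    fix j assume "j < k"
    have "{x\<in>L v. bad x j} \<subseteq> (\<Union>u\<in>W. {x\<in>L v. \<exists>y\<in>L u. EH x y \<and> col y = j})"
      unfolding bad_def U_def by auto
    moreover have fin: "finite (\<Union>u\<in>W. {x\<in>L v. \<exists>y\<in>L u. EH x y \<and> col y = j})"
      using insert.hyps(1) finLv by auto
    ultimately have "card {x\<in>L v. bad x j} \<le> card (\<Union>u\<in>W. {x\<in>L v. \<exists>y\<in>L u. EH x y \<and> col y = j})"
      by (intro card_mono) auto
    also have "\<dots> \<le> (\<Sum>u\<in>W. card {x\<in>L v. \<exists>y\<in>L u. EH x y \<and> col y = j})" by (rule card_UN_le[OF insert.hyps(1)])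
    also have "\<dots> \<le> (\<Sum>u\<in>W. 1)"
    proof (rule sum_mono)
      fix u assume u: "u \<in> W"
      then have uv: "u \<noteq> v" using insert.hyps by auto
      have uV: "u \<in> V" using u WV by auto
      have f: "finite {x\<in>L v. \<exists>y\<in>L u. EH x y \<and> col y = j}" using finLv by simp
      have "\<forall>x\<in>{x\<in>L v. \<exists>y\<in>L u. EH x y \<and> col y = j}. \<forall>x'\<in>{x\<in>L v. \<exists>y\<in>L u. EH x y \<and> col y = j}. x = x'"
      proof (intro ballI)
        fix x x' assume x: "x \<in> {x\<in>L v. \<exists>y\<in>L u. EH x y \<and> col y = j}"
          and x': "x' \<in> {x\<in>L v. \<exists>y\<in>L u. EH x y \<and> col y = j}"
        obtain y where y: "y \<in> L u" "EH x y" "col y = j" using x by blast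
        obtain y' where y': "y' \<in> L u" "EH x' y'" "col y' = j" using x' by blast
        have inj: "inj_on col (L u)" using col(1) u by blast
        have "col y = col y'" using y(3) y'(3) by simp
        then have "y = y'" by (rule inj_onD[OF inj _ y(1) y'(1)])
        then have e1: "EH y x" "EH y x'" using y(2) y'(2) cc2[OF c] by blast+
        have xv: "x \<in> L v" "x' \<in> L v" using x x' by auto
        have Euv: "E u v" by (rule edge_E[OF c uV vV uv y(1) xv(1) e1(1)])
        show "x = x'" using cc7[OF c, rule_format, of u v y x x'] uV vV Euv y(1) xv e1 by blast
      qed
      then show "card {x\<in>L v. \<exists>y\<in>L u. EH x y \<and> col y = j} \<le> 1"
        using card_le_Suc0_iff_eq[OF f] by simp
    qed
    also have "\<dots> = card W" by simp
    finally show "card {x\<in>L v. bad x j} \<le> card V" using cW by linarith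
  qed
  obtain \<sigma> where sg: "inj_on \<sigma> (L v)" "\<sigma> ` L v \<subseteq> {..<k}" "\<forall>x\<in>L v. \<not> bad x (\<sigma> x)"
  proof -
    have ck: "card (L v) = k" using kL vV by blast
    show ?thesis using match_lemma[OF finLv ck dk b1 b2] that by blast
  qed
  define col' where "col' = (\<lambda>z. if z \<in> L v then \<sigma> z else col z)"
  have disj: "\<And>u. u \<in> W \<Longrightarrow> L u \<inter> L v = {}"
    using cc4'[OF c] WV vV insert.hyps(2) by blast
  have P1: "\<forall>u\<in>insert v W. inj_on col' (L u) \<and> col' ` L u \<subseteq> {..<k}"
  proof
    fix u assume u: "u \<in> insert v W"
    show "inj_on col' (L u) \<and> col' ` L u \<subseteq> {..<k}"
    proof (cases "u = v")
      case True
      have e: "\<And>z. z \<in> L v \<Longrightarrow> col' z = \<sigma> z" unfolding col'_def by simp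
      have "inj_on col' (L v)" using sg(1) inj_on_cong[of "L v" col' \<sigma>, OF e] by blast
      moreover have "col' ` L v = \<sigma> ` L v" using e by (rule image_cong[OF refl])
      ultimately show ?thesis using True sg(2) by simp
    next
      case False
      then have uW: "u \<in> W" using u by blast
      have e: "\<And>z. z \<in> L u \<Longrightarrow> col' z = col z" unfolding col'_def using disj[OF uW] by auto
      have "inj_on col' (L u)" using col(1) uW inj_on_cong[of "L u" col' col, OF e] by blast
      moreover have "col' ` L u = col ` L u" using e by (rule image_cong[OF refl])
      ultimately show ?thesis using col(1) uW by simp
    qed
  qed
  have P2: "\<forall>x\<in>\<Union>(L ` insert v W). \<forall>y\<in>\<Union>(L ` insert v W). EH x y \<longrightarrow> col' x \<noteq> col' y"
  proof (intro ballI impI)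
    fix x y assume x: "x \<in> \<Union>(L ` insert v W)" and y: "y \<in> \<Union>(L ` insert v W)" and xy: "EH x y"
    have yx: "EH y x" and nxy: "x \<noteq> y" using xy cc2[OF c] by blast+
    show "col' x \<noteq> col' y"
    proof (cases "x \<in> L v")
      case xin: True
      show ?thesis
      proof (cases "y \<in> L v")
        case True
        then show ?thesis using xin nxy sg(1) unfolding col'_def by (auto dest: inj_onD)
      next
        case False
        then have "y \<in> U" using y unfolding U_def by auto
        then have "col y \<noteq> \<sigma> x" using sg(3) xin xy unfolding bad_def by blast
        then show ?thesis using xin False unfolding col'_def by simp
      qed
    next
      case xout: False
      then have xU: "x \<in> U" using x unfolding U_def by auto
      show ?thesis
      proof (cases "y \<in> L v")
        case True
        then have "col x \<noteq> \<sigma> y" using sg(3) xU yx unfolding bad_def by blast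
        then show ?thesis using xout True unfolding col'_def by simp
      next
        case False
        then have "y \<in> U" using y unfolding U_def by auto
        then have "col x \<noteq> col y" using col(2) xU xy unfolding U_def by blast
        then show ?thesis using xout False unfolding col'_def by simp
      qed
    qed
  qed
  show ?case using P1 P2 by blast
qed

lemma exists_packing:
  assumes c: "corr_cover V E L VH EH" and finV: "finite V"
    and kL: "\<forall>v\<in>V. card (L v) = k" and dk: "2 * card V < k"
  shows "has_frac_packing V L VH EH"
proof -
  obtain col where col: "\<forall>v\<in>V. inj_on col (L v) \<and> col ` L v \<subseteq> {..<k}"
      "\<forall>x\<in>\<Union>(L ` V). \<forall>y\<in>\<Union>(L ` V). EH x y \<longrightarrow> col x \<noteq> col y"
    using coloring_aux[OF c finV kL dk finV] by blast
  have U: "\<Union>(L ` V) = VH" by (rule cc3[OF c])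
  have surj: "\<And>v. v \<in> V \<Longrightarrow> col ` L v = {..<k}"
  proof -
    fix v assume v: "v \<in> V"
    have "card (col ` L v) = card (L v)" using col(1) v by (intro card_image) blast
    then have "card (col ` L v) = card {..<k}" using kL v by simp
    then show "col ` L v = {..<k}" using col(1) v by (intro card_subset_eq) auto
  qed
  have kpos: "k > 0" using dk by linarith
  have sp: "set_pmf (pmf_of_set {..<k}) = {..<k}" using kpos by (intro set_pmf_of_set) auto
  define p where "p = map_pmf (\<lambda>j. {x\<in>VH. col x = j}) (pmf_of_set {..<k})"
  show ?thesis unfolding has_frac_packing_def
  proof (intro exI[of _ p] conjI ballI)
    fix I assume "I \<in> set_pmf p"
    then obtain j where j: "j < k" "I = {x\<in>VH. col x = j}" using sp unfolding p_def by auto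
    show "indep_transversal V L VH EH I" unfolding indep_transversal_def
    proof (intro conjI ballI)
      show "I \<subseteq> VH" using j by auto
    next
      fix x y assume "x \<in> I" "y \<in> I"
      then have "x \<in> \<Union>(L ` V)" "y \<in> \<Union>(L ` V)" "col x = col y" using j U by auto
      then show "\<not> EH x y" using col(2) by metis
    next
      fix v assume v: "v \<in> V"
      obtain x where x: "x \<in> L v" "col x = j" using surj[OF v] j(1) by (metis imageE lessThan_iff)
      have "I \<inter> L v = {x}"
      proof
        show "{x} \<subseteq> I \<inter> L v" using x j ccL[OF c v] by auto
        show "I \<inter> L v \<subseteq> {x}"
        proof
          fix z assume "z \<in> I \<inter> L v"
          then have "z \<in> L v" "col z = col x" using j x by auto
          then show "z \<in> {x}" using col(1) v x(1) by (auto dest: inj_onD)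
        qed
      qed
      then show "card (I \<inter> L v) = 1" by simp
    qed
  next
    fix v y assume v: "v \<in> V" and y: "y \<in> L v"
    have yVH: "y \<in> VH" using ccL[OF c v] y by auto
    have cy: "col y < k" using col(1) v y by auto
    have eq: "{..<k} \<inter> ((\<lambda>j. {x\<in>VH. col x = j}) -` {I. y \<in> I}) = {col y}"
      using yVH cy by auto
    have "measure_pmf.prob p {I. y \<in> I} = measure_pmf.prob (pmf_of_set {..<k}) ((\<lambda>j. {x\<in>VH. col x = j}) -` {I. y \<in> I})"
      unfolding p_def by (rule measure_map_pmf)
    also have "\<dots> = real (card ({..<k} \<inter> ((\<lambda>j. {x\<in>VH. col x = j}) -` {I. y \<in> I}))) / real (card {..<k})"
      by (rule measure_pmf_of_set) (use kpos in auto)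
    also have "\<dots> = 1 / real k" by (simp only: eq) simp
    finally have "measure_pmf.prob p {I. y \<in> I} = 1 / real k" .
    then show "measure_pmf.prob p {I. y \<in> I} = 1 / real (card (L v))" using kL v by simp
  qed
qed


lemma prob_bind_pmf_of_set:
  assumes "finite S" "S \<noteq> {}"
  shows "measure_pmf.prob (bind_pmf (pmf_of_set S) N) X = (\<Sum>x\<in>S. measure_pmf.prob (N x) X) / card S"
proof -
  have "ennreal (measure_pmf.prob (bind_pmf (pmf_of_set S) N) X) = emeasure (bind_pmf (pmf_of_set S) N) X"
    by (simp add: measure_pmf.emeasure_eq_measure)
  also have "\<dots> = (\<Sum>x\<in>S. emeasure (N x) X) / card S"
    using assms by (simp add: nn_integral_pmf_of_set)
  also have "\<dots> = (\<Sum>x\<in>S. ennreal (measure_pmf.prob (N x) X)) / ennreal (card S)"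
    by (simp add: measure_pmf.emeasure_eq_measure ennreal_of_nat_eq_real_of_nat)
  also have "\<dots> = ennreal ((\<Sum>x\<in>S. measure_pmf.prob (N x) X) / card S)"
    using assms by (subst sum_ennreal, simp, subst divide_ennreal) (auto simp: sum_nonneg card_gt_0_iff)
  finally show ?thesis
    by (subst (asm) ennreal_inj) (auto intro!: divide_nonneg_nonneg sum_nonneg)
qed

lemma packing_nonempty:
  assumes "has_frac_packing V L VH EH" "v \<in> V"
  shows "L v \<noteq> {}"
proof -
  obtain p where p: "\<forall>I\<in>set_pmf p. indep_transversal V L VH EH I"
    using assms(1) unfolding has_frac_packing_def by blast
  obtain I where "I \<in> set_pmf p" using set_pmf_not_empty by fast
  with p assms(2) have "card (I \<inter> L v) = 1" unfolding indep_transversal_def by blast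
  then show ?thesis by auto
qed

lemma mix_lemma:
  fixes L :: "'v \<Rightarrow> 'h set"
  assumes v0: "v0 \<in> V" and fin: "finite (L v0)" and two: "card (L v0) \<ge> 2"
    and disj: "\<forall>v\<in>V. v \<noteq> v0 \<longrightarrow> L v \<inter> L v0 = {}"
    and pk: "\<forall>x\<in>L v0. has_frac_packing V (L(v0 := L v0 - {x})) (VH - {x}) (EHx x)"
    and agree: "\<forall>x\<in>L v0. \<forall>a\<in>VH-{x}. \<forall>b\<in>VH-{x}. EHx x a b = EH a b"
  shows "has_frac_packing V L VH EH"
proof -
  have "\<forall>x\<in>L v0. \<exists>p. (\<forall>I\<in>set_pmf p. indep_transversal V (L(v0 := L v0 - {x})) (VH - {x}) (EHx x) I) \<and>
        (\<forall>v\<in>V. \<forall>y\<in>(L(v0 := L v0 - {x})) v. measure_pmf.prob p {I. y \<in> I} = 1 / real (card ((L(v0 := L v0 - {x})) v)))"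
    using pk unfolding has_frac_packing_def by blast
  then obtain P where P: "\<And>x. x \<in> L v0 \<Longrightarrow> (\<forall>I\<in>set_pmf (P x). indep_transversal V (L(v0 := L v0 - {x})) (VH - {x}) (EHx x) I) \<and>
        (\<forall>v\<in>V. \<forall>y\<in>(L(v0 := L v0 - {x})) v. measure_pmf.prob (P x) {I. y \<in> I} = 1 / real (card ((L(v0 := L v0 - {x})) v)))"
    by metis
  define m where "m = card (L v0)"
  have ne: "L v0 \<noteq> {}" using two by auto
  define p where "p = bind_pmf (pmf_of_set (L v0)) P"
  show ?thesis unfolding has_frac_packing_def
  proof (intro exI[of _ p] conjI ballI)
    fix I assume "I \<in> set_pmf p"
    then obtain x where x: "x \<in> L v0" "I \<in> set_pmf (P x)" using fin ne by (auto simp: p_def)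
    then have it: "indep_transversal V (L(v0 := L v0 - {x})) (VH - {x}) (EHx x) I" using P by blast
    show "indep_transversal V L VH EH I"
      unfolding indep_transversal_def
    proof (intro conjI ballI)
      show "I \<subseteq> VH" using it unfolding indep_transversal_def by blast
      fix a b assume "a \<in> I" "b \<in> I"
      then show "\<not> EH a b" using it x agree unfolding indep_transversal_def by blast
    next
      fix v assume v: "v \<in> V"
      have "card (I \<inter> (L(v0 := L v0 - {x})) v) = 1" using it v unfolding indep_transversal_def by blast
      moreover have "I \<inter> (L(v0 := L v0 - {x})) v = I \<inter> L v"
        using it unfolding indep_transversal_def by auto
      ultimately show "card (I \<inter> L v) = 1" by simp
    qed
  next
    fix v y assume v: "v \<in> V" and y: "y \<in> L v"
    have pr: "measure_pmf.prob p {I. y \<in> I} = (\<Sum>x\<in>L v0. measure_pmf.prob (P x) {I. y \<in> I}) / m"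
      unfolding p_def m_def using fin ne by (rule prob_bind_pmf_of_set)
    show "measure_pmf.prob p {I. y \<in> I} = 1 / real (card (L v))"
    proof (cases "v = v0")
      case False
      with disj v y have ny: "y \<notin> L v0" by blast
      have "\<And>x. x \<in> L v0 \<Longrightarrow> measure_pmf.prob (P x) {I. y \<in> I} = 1 / real (card (L v))"
        using P v y False by fastforce
      then have "(\<Sum>x\<in>L v0. measure_pmf.prob (P x) {I. y \<in> I}) = m * (1 / real (card (L v)))"
        by (simp add: m_def)
      then show ?thesis using pr two by (simp add: m_def)
    next
      case True
      have z: "measure_pmf.prob (P y) {I. y \<in> I} = 0"
      proof -
        have "\<forall>I\<in>set_pmf (P y). I \<subseteq> VH - {y}" using P[of y] y True unfolding indep_transversal_def by blast
        then have "set_pmf (P y) \<inter> {I. y \<in> I} = {}" by blast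
        then show ?thesis by (simp add: measure_pmf_zero_iff)
      qed
      have o: "\<And>x. x \<in> L v0 - {y} \<Longrightarrow> measure_pmf.prob (P x) {I. y \<in> I} = 1 / real (m - 1)"
      proof -
        fix x assume x: "x \<in> L v0 - {y}"
        then have "measure_pmf.prob (P x) {I. y \<in> I} = 1 / real (card (L v0 - {x}))"
          using P[of x] v y True by auto
        then show "measure_pmf.prob (P x) {I. y \<in> I} = 1 / real (m - 1)"
          using x fin by (simp add: m_def)
      qed
      have "(\<Sum>x\<in>L v0. measure_pmf.prob (P x) {I. y \<in> I}) =
            measure_pmf.prob (P y) {I. y \<in> I} + (\<Sum>x\<in>L v0 - {y}. measure_pmf.prob (P x) {I. y \<in> I})"
        using fin y True by (simp add: sum.remove)
      also have "\<dots> = real (m - 1) * (1 / real (m - 1))"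
        using z o fin y True by (simp add: m_def)
      also have "\<dots> = 1" using two by (simp add: m_def)
      finally show ?thesis using pr True by (simp add: m_def)
    qed
  qed
qed

lemma restrict_cover:
  assumes c: "corr_cover V E L VH EH" and v0: "v0 \<in> V" and x: "x \<in> L v0"
  shows "corr_cover V E (L(v0 := L v0 - {x})) (VH - {x}) (\<lambda>a b. EH a b \<and> a \<noteq> x \<and> b \<noteq> x)"
proof -
  have d: "\<forall>u\<in>V. \<forall>v\<in>V. u \<noteq> v \<longrightarrow> L u \<inter> L v = {}" using cc4[OF c] .
  have u: "(\<Union>v\<in>V. L v) = VH" using cc3[OF c] .
  have un: "(\<Union>v\<in>V. (L(v0 := L v0 - {x})) v) = VH - {x}"
  proof
    show "(\<Union>v\<in>V. (L(v0 := L v0 - {x})) v) \<subseteq> VH - {x}"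
      using u d v0 x by auto
    show "VH - {x} \<subseteq> (\<Union>v\<in>V. (L(v0 := L v0 - {x})) v)"
    proof
      fix y assume "y \<in> VH - {x}"
      then obtain v where "v \<in> V" "y \<in> L v" "y \<noteq> x" using u by auto
      then show "y \<in> (\<Union>v\<in>V. (L(v0 := L v0 - {x})) v)" by (cases "v = v0") auto
    qed
  qed
  have xn: "\<forall>v\<in>V. v \<noteq> v0 \<longrightarrow> x \<notin> L v" using d v0 x by blast
  have mem: "\<And>a v. v \<in> V \<Longrightarrow> a \<in> (L(v0 := L v0 - {x})) v \<Longrightarrow> a \<in> L v \<and> a \<noteq> x"
  proof -
    fix a v assume "v \<in> V" "a \<in> (L(v0 := L v0 - {x})) v"
    then show "a \<in> L v \<and> a \<noteq> x" using xn by (cases "v = v0") auto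
  qed
  have p5: "\<forall>v\<in>V. \<forall>a\<in>(L(v0 := L v0 - {x})) v. \<forall>b\<in>(L(v0 := L v0 - {x})) v. a \<noteq> b \<longrightarrow> (EH a b \<and> a \<noteq> x \<and> b \<noteq> x)"
  proof (intro ballI impI)
    fix v a b assume "v \<in> V" "a \<in> (L(v0 := L v0 - {x})) v" "b \<in> (L(v0 := L v0 - {x})) v" "a \<noteq> b"
    moreover from this have "a \<in> L v \<and> a \<noteq> x" "b \<in> L v \<and> b \<noteq> x" using mem by blast+
    ultimately show "EH a b \<and> a \<noteq> x \<and> b \<noteq> x" using cc5[OF c] by blast
  qed
  have p6: "\<forall>u\<in>V. \<forall>v\<in>V. u \<noteq> v \<and> \<not> E u v \<longrightarrow> (\<forall>a\<in>(L(v0 := L v0 - {x})) u. \<forall>b\<in>(L(v0 := L v0 - {x})) v. \<not> (EH a b \<and> a \<noteq> x \<and> b \<noteq> x))"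
  proof (intro ballI impI)
    fix u v a b assume "u \<in> V" "v \<in> V" "u \<noteq> v \<and> \<not> E u v" "a \<in> (L(v0 := L v0 - {x})) u" "b \<in> (L(v0 := L v0 - {x})) v"
    moreover from this have "a \<in> L u" "b \<in> L v" using mem by blast+
    ultimately show "\<not> (EH a b \<and> a \<noteq> x \<and> b \<noteq> x)" using cc6[OF c] by blast
  qed
  have p7: "\<forall>u\<in>V. \<forall>v\<in>V. E u v \<longrightarrow> (\<forall>a\<in>(L(v0 := L v0 - {x})) u. \<forall>b\<in>(L(v0 := L v0 - {x})) v. \<forall>b'\<in>(L(v0 := L v0 - {x})) v.
      (EH a b \<and> a \<noteq> x \<and> b \<noteq> x) \<and> (EH a b' \<and> a \<noteq> x \<and> b' \<noteq> x) \<longrightarrow> b = b')"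
  proof (intro ballI impI)
    fix u v a b b' assume "u \<in> V" "v \<in> V" "E u v" "a \<in> (L(v0 := L v0 - {x})) u" "b \<in> (L(v0 := L v0 - {x})) v"
      "b' \<in> (L(v0 := L v0 - {x})) v" "(EH a b \<and> a \<noteq> x \<and> b \<noteq> x) \<and> (EH a b' \<and> a \<noteq> x \<and> b' \<noteq> x)"
    moreover from this have "a \<in> L u" "b \<in> L v" "b' \<in> L v" using mem by blast+
    ultimately show "b = b'" using cc7[OF c] by blast
  qed
  have p2: "\<forall>a b. (EH a b \<and> a \<noteq> x \<and> b \<noteq> x) \<longrightarrow> a \<in> VH - {x} \<and> b \<in> VH - {x} \<and> a \<noteq> b \<and> (EH b a \<and> b \<noteq> x \<and> a \<noteq> x)"
    using cc2[OF c] by blast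
  have p1: "finite (VH - {x})" using cc1[OF c] by simp
  have p4: "\<forall>u\<in>V. \<forall>v\<in>V. u \<noteq> v \<longrightarrow> (L(v0 := L v0 - {x})) u \<inter> (L(v0 := L v0 - {x})) v = {}"
  proof (intro ballI impI)
    fix u v assume uv: "u \<in> V" "v \<in> V" "u \<noteq> v"
    have "(L(v0 := L v0 - {x})) u \<subseteq> L u" "(L(v0 := L v0 - {x})) v \<subseteq> L v" by auto
    moreover have "L u \<inter> L v = {}" using d uv by blast
    ultimately show "(L(v0 := L v0 - {x})) u \<inter> (L(v0 := L v0 - {x})) v = {}" by blast
  qed
  show ?thesis unfolding corr_cover_def
    using p1 p2 un p4 p5 p6 p7 by (intro conjI) assumption+
qed

lemma mono_corr_aux:
  assumes g: "graph V E"
    and H: "\<forall>(L :: 'v \<Rightarrow> 'h set) VH EH. corr_cover V E L VH EH \<and> (\<forall>v\<in>V. card (L v) = s v)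
          \<longrightarrow> has_frac_packing V L VH EH"
  shows "\<And>(L :: 'v \<Rightarrow> 'h set) VH EH. n = (\<Sum>v\<in>V. card (L v) - s v) \<Longrightarrow>
     corr_cover V E L VH EH \<Longrightarrow> (\<forall>v\<in>V. card (L v) \<ge> s v) \<Longrightarrow> has_frac_packing V L VH EH"
proof (induction n rule: less_induct)
  case (less n L VH EH)
  have finV: "finite V" using g unfolding graph_def by blast
  have finL: "\<And>v. v \<in> V \<Longrightarrow> finite (L v)"
  proof -
    fix v assume "v \<in> V"
    then have "L v \<subseteq> VH" using cc3[OF less.prems(2)] by blast
    then show "finite (L v)" using cc1[OF less.prems(2)] finite_subset by blast
  qed
  show ?case
  proof (cases "\<forall>v\<in>V. card (L v) = s v")
    case True
    have hh: "corr_cover V E L VH EH \<and> (\<forall>v\<in>V. card (L v) = s v)" using less.prems(2) True by blast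
    show ?thesis by (rule H[rule_format, OF hh])
  next
    case False
    then obtain v0 where v00: "v0 \<in> V" "card (L v0) \<noteq> s v0" by blast
    then have v0: "v0 \<in> V" "card (L v0) > s v0" using less.prems(3) by (auto simp: le_neq_implies_less)
    have fin0: "finite (L v0)" using finL v0 by blast
    have ne: "L v0 \<noteq> {}" using v0 by auto
    have sub: "\<And>x. x \<in> L v0 \<Longrightarrow> has_frac_packing V (L(v0 := L v0 - {x})) (VH - {x}) (\<lambda>a b. EH a b \<and> a \<noteq> x \<and> b \<noteq> x)"
    proof -
      fix x assume x: "x \<in> L v0"
      let ?L = "L(v0 := L v0 - {x})"
      have cx: "card (?L v0) = card (L v0) - 1" using x fin0 by simp
      have sm: "(\<Sum>v\<in>V. card (?L v) - s v) < n"
      proof -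
        have a: "(\<Sum>v\<in>V. card (?L v) - s v) = (card (?L v0) - s v0) + (\<Sum>v\<in>V - {v0}. card (L v) - s v)"
          using finV v0 by (simp add: sum.remove)
        have b: "n = (card (L v0) - s v0) + (\<Sum>v\<in>V - {v0}. card (L v) - s v)"
          using finV v0 less.prems(1) by (simp add: sum.remove)
        show ?thesis using a b cx v0 by linarith
      qed
      show "has_frac_packing V ?L (VH - {x}) (\<lambda>a b. EH a b \<and> a \<noteq> x \<and> b \<noteq> x)"
        apply (rule less.IH[OF sm refl])
        apply (rule restrict_cover[OF less.prems(2) v0(1) x])
        apply (intro ballI)
        subgoal for v using less.prems(3) cx v0 by (cases "v = v0") auto
        done
    qed
    show ?thesis
    proof (cases "card (L v0) \<ge> 2")
      case True
      show ?thesis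
        apply (rule mix_lemma[where L=L and V=V, OF v0(1) fin0 True, where EHx = "\<lambda>x a b. EH a b \<and> a \<noteq> x \<and> b \<noteq> x"])
        apply (intro ballI impI)
        apply (rule cc4'[OF less.prems(2)])
        apply (assumption, rule v0(1), assumption)
        apply (intro ballI)
        apply (rule sub, assumption)
        by simp
    next
      case False
      then have "card (L v0) = 1" using v0 by linarith
      then obtain x where "L v0 = {x}" using card_1_singletonE by blast
      then have "has_frac_packing V (L(v0 := {})) (VH - {x}) (\<lambda>a b. EH a b \<and> a \<noteq> x \<and> b \<noteq> x)"
        using sub[of x] by simp
      then have "(L(v0 := {})) v0 \<noteq> {}" by (rule packing_nonempty) (rule v0(1))
      then show ?thesis by simp
    qed
  qed
qed

lemma mono_corr:
  assumes g: "graph V E"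
    and H: "\<forall>(L :: 'v \<Rightarrow> 'h set) VH EH. corr_cover V E L VH EH \<and> (\<forall>v\<in>V. card (L v) = s v)
          \<longrightarrow> has_frac_packing V L VH EH"
  shows "\<forall>(L :: 'v \<Rightarrow> 'h set) VH EH. corr_cover V E L VH EH \<and> (\<forall>v\<in>V. card (L v) \<ge> s v)
          \<longrightarrow> has_frac_packing V L VH EH"
  using mono_corr_aux[OF g H refl] by blast

lemma lc_L_upd: "lc_L (Lst(v0 := Lst v0 - {c})) = (lc_L Lst)(v0 := lc_L Lst v0 - {(v0,c)})"
  by (auto simp: lc_L_def fun_eq_iff)

lemma lc_V_upd: "v0 \<in> V \<Longrightarrow> lc_V V (Lst(v0 := Lst v0 - {c})) = lc_V V Lst - {(v0,c)}"
  by (auto simp: lc_V_def split: if_splits)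

lemma lc_E_agree: "v0 \<in> V \<Longrightarrow> a \<in> lc_V V Lst - {(v0,c)} \<Longrightarrow> b \<in> lc_V V Lst - {(v0,c)} \<Longrightarrow>
    lc_E V E (Lst(v0 := Lst v0 - {c})) a b = lc_E V E Lst a b"
  unfolding lc_E_def by (simp add: lc_V_upd)

lemma mono_list_aux:
  assumes g: "graph V E"
    and H: "\<forall>Lst :: 'v \<Rightarrow> nat set. (\<forall>v\<in>V. finite (Lst v) \<and> card (Lst v) = s v)
          \<longrightarrow> has_frac_packing V (lc_L Lst) (lc_V V Lst) (lc_E V E Lst)"
  shows "\<And>Lst :: 'v \<Rightarrow> nat set. n = (\<Sum>v\<in>V. card (Lst v) - s v) \<Longrightarrow>
     (\<forall>v\<in>V. finite (Lst v) \<and> card (Lst v) \<ge> s v) \<Longrightarrow> has_frac_packing V (lc_L Lst) (lc_V V Lst) (lc_E V E Lst)"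
proof (induction n rule: less_induct)
  case (less n Lst)
  have finV: "finite V" using g unfolding graph_def by blast
  show ?case
  proof (cases "\<forall>v\<in>V. card (Lst v) = s v")
    case True
    have hh: "\<forall>v\<in>V. finite (Lst v) \<and> card (Lst v) = s v" using less.prems(2) True by blast
    show ?thesis using mp[OF spec[OF H, of Lst] hh] .
  next
    case False
    then obtain v0 where v00: "v0 \<in> V" "card (Lst v0) \<noteq> s v0" by blast
    then have v0: "v0 \<in> V" "card (Lst v0) > s v0" using less.prems(2) by (auto simp: le_neq_implies_less)
    have fin0: "finite (Lst v0)" using less.prems(2) v0(1) by blast
    have sub: "\<And>c. c \<in> Lst v0 \<Longrightarrow> has_frac_packing V (lc_L (Lst(v0 := Lst v0 - {c}))) (lc_V V (Lst(v0 := Lst v0 - {c}))) (lc_E V E (Lst(v0 := Lst v0 - {c})))"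
    proof -
      fix c assume c: "c \<in> Lst v0"
      let ?L = "Lst(v0 := Lst v0 - {c})"
      have cx: "card (?L v0) = card (Lst v0) - 1" using c fin0 by simp
      have sm: "(\<Sum>v\<in>V. card (?L v) - s v) < n"
      proof -
        have a: "(\<Sum>v\<in>V. card (?L v) - s v) = (card (?L v0) - s v0) + (\<Sum>v\<in>V - {v0}. card (?L v) - s v)"
          by (rule sum.remove[OF finV v0(1)])
        have a2: "(\<Sum>v\<in>V - {v0}. card (?L v) - s v) = (\<Sum>v\<in>V - {v0}. card (Lst v) - s v)"
          by (rule sum.cong) auto
        have b: "(\<Sum>v\<in>V. card (Lst v) - s v) = (card (Lst v0) - s v0) + (\<Sum>v\<in>V - {v0}. card (Lst v) - s v)"
          by (rule sum.remove[OF finV v0(1)])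
        show ?thesis using a a2 b cx v0 less.prems(1) by linarith
      qed
      show "has_frac_packing V (lc_L ?L) (lc_V V ?L) (lc_E V E ?L)"
        apply (rule less.IH[OF sm refl])
        apply (intro ballI)
        subgoal for v using less.prems(2) cx v0 by (cases "v = v0") auto
        done
    qed
    show ?thesis
    proof (cases "card (Lst v0) \<ge> 2")
      case True
      have f1: "finite (lc_L Lst v0)" using fin0 by (simp add: lc_L_def)
      have c1: "card (lc_L Lst v0) \<ge> 2" using True by (simp add: lc_L_def card_cartesian_product)
      show ?thesis
      proof (rule mix_lemma[where L="lc_L Lst" and V=V, OF v0(1) f1 c1, where EHx = "\<lambda>x. lc_E V E (Lst(v0 := Lst v0 - {snd x}))"])
        show "\<forall>v\<in>V. v \<noteq> v0 \<longrightarrow> lc_L Lst v \<inter> lc_L Lst v0 = {}" by (auto simp: lc_L_def)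
        show "\<forall>x\<in>lc_L Lst v0. has_frac_packing V ((lc_L Lst)(v0 := lc_L Lst v0 - {x})) (lc_V V Lst - {x})
               (lc_E V E (Lst(v0 := Lst v0 - {snd x})))"
        proof
          fix x assume x: "x \<in> lc_L Lst v0"
          then obtain c where xc: "x = (v0, c)" "c \<in> Lst v0" by (auto simp: lc_L_def)
          show "has_frac_packing V ((lc_L Lst)(v0 := lc_L Lst v0 - {x})) (lc_V V Lst - {x})
               (lc_E V E (Lst(v0 := Lst v0 - {snd x})))"
            using sub[OF xc(2)] by (simp add: xc(1) lc_L_upd lc_V_upd[OF v0(1)])
        qed
        show "\<forall>x\<in>lc_L Lst v0. \<forall>a\<in>lc_V V Lst - {x}. \<forall>b\<in>lc_V V Lst - {x}.
              lc_E V E (Lst(v0 := Lst v0 - {snd x})) a b = lc_E V E Lst a b"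
        proof (intro ballI)
          fix x a b assume x: "x \<in> lc_L Lst v0" and a: "a \<in> lc_V V Lst - {x}" and b: "b \<in> lc_V V Lst - {x}"
          then obtain c where xc: "x = (v0, c)" by (auto simp: lc_L_def)
          show "lc_E V E (Lst(v0 := Lst v0 - {snd x})) a b = lc_E V E Lst a b"
            using lc_E_agree[OF v0(1), of a Lst c b E] a b xc by simp
        qed
      qed
    next
      case False
      then have "card (Lst v0) = 1" using v0 by linarith
      then obtain c where c: "Lst v0 = {c}" using card_1_singletonE by blast
      then have "has_frac_packing V (lc_L (Lst(v0 := {}))) (lc_V V (Lst(v0 := {}))) (lc_E V E (Lst(v0 := {})))"
        using sub[of c] by simp
      then have "lc_L (Lst(v0 := {})) v0 \<noteq> {}" by (rule packing_nonempty) (rule v0(1))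
      then show ?thesis by (simp add: lc_L_def)
    qed
  qed
qed

lemma transfer_nat:
  fixes L :: "'v \<Rightarrow> 'h set"
  assumes c: "corr_cover V E L VH EH"
    and P: "\<forall>(L' :: 'v \<Rightarrow> nat set) VH' EH'. corr_cover V E L' VH' EH' \<and> (\<forall>v\<in>V. card (L' v) \<ge> k)
          \<longrightarrow> has_frac_packing V L' VH' EH'"
    and kk: "\<forall>v\<in>V. card (L v) \<ge> k"
  shows "has_frac_packing V L VH EH"
proof -
  obtain f :: "'h \<Rightarrow> nat" where inj: "inj_on f VH"
    using finite_imp_inj_to_nat_seg[OF cc1[OF c]] by blast
  define L' where "L' = (\<lambda>v. f ` L v)"
  define VH' where "VH' = f ` VH"
  define EH' where "EH' = (\<lambda>a b. \<exists>x\<in>VH. \<exists>y\<in>VH. a = f x \<and> b = f y \<and> EH x y)"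
  have LVH: "\<And>v. v \<in> V \<Longrightarrow> L v \<subseteq> VH" by (rule ccL[OF c])
  have fe: "\<And>x y. x \<in> VH \<Longrightarrow> y \<in> VH \<Longrightarrow> f x = f y \<longleftrightarrow> x = y" using inj by (auto dest: inj_onD)
  have EHf: "\<And>x y. x \<in> VH \<Longrightarrow> y \<in> VH \<Longrightarrow> EH' (f x) (f y) \<longleftrightarrow> EH x y"
  proof -
    fix x y assume x: "x \<in> VH" and y: "y \<in> VH"
    show "EH' (f x) (f y) \<longleftrightarrow> EH x y"
    proof
      assume "EH' (f x) (f y)"
      then obtain x' y' where "x' \<in> VH" "y' \<in> VH" "f x = f x'" "f y = f y'" "EH x' y'" unfolding EH'_def by blast
      then show "EH x y" using fe x y by metis
    next
      assume "EH x y" then show "EH' (f x) (f y)" unfolding EH'_def using x y by blast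
    qed
  qed
  have EH'D: "\<And>a b. EH' a b \<Longrightarrow> \<exists>x\<in>VH. \<exists>y\<in>VH. a = f x \<and> b = f y \<and> EH x y" unfolding EH'_def by blast
  have c2: "\<forall>x y. EH x y \<longrightarrow> x \<in> VH \<and> y \<in> VH \<and> x \<noteq> y \<and> EH y x" by (rule cc2[OF c])
  have cov: "corr_cover V E L' VH' EH'"
    unfolding corr_cover_def
  proof (intro conjI)
    show "finite VH'" unfolding VH'_def using cc1[OF c] by simp
    show "\<forall>x y. EH' x y \<longrightarrow> x \<in> VH' \<and> y \<in> VH' \<and> x \<noteq> y \<and> EH' y x"
    proof (intro allI impI)
      fix a b assume "EH' a b"
      then obtain x y where xy: "x \<in> VH" "y \<in> VH" "a = f x" "b = f y" "EH x y" using EH'D by blast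
      then have "x \<noteq> y" "EH y x" using c2 by blast+
      then show "a \<in> VH' \<and> b \<in> VH' \<and> a \<noteq> b \<and> EH' b a" using xy fe EHf unfolding VH'_def by auto
    qed
    show "(\<Union>v\<in>V. L' v) = VH'" unfolding L'_def VH'_def using cc3[OF c] by blast
    show "\<forall>u\<in>V. \<forall>v\<in>V. u \<noteq> v \<longrightarrow> L' u \<inter> L' v = {}"
    proof (intro ballI impI)
      fix u v assume uv: "u \<in> V" "v \<in> V" "u \<noteq> v"
      have "f ` (L u \<inter> L v) = f ` L u \<inter> f ` L v" by (rule inj_on_image_Int[OF inj LVH[OF uv(1)] LVH[OF uv(2)]])
      then show "L' u \<inter> L' v = {}" unfolding L'_def using cc4'[OF c uv] by simp
    qed
    show "\<forall>v\<in>V. \<forall>x\<in>L' v. \<forall>y\<in>L' v. x \<noteq> y \<longrightarrow> EH' x y"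
    proof (intro ballI impI)
      fix v a b assume v: "v \<in> V" and a: "a \<in> L' v" and b: "b \<in> L' v" and ab: "a \<noteq> b"
      obtain x y where xy: "x \<in> L v" "y \<in> L v" "a = f x" "b = f y" using a b unfolding L'_def by blast
      have xyV: "x \<in> VH" "y \<in> VH" using xy LVH[OF v] by auto
      have "x \<noteq> y" using xy ab by auto
      then have "EH x y" using cc5[OF c] v xy by blast
      then show "EH' a b" using EHf[OF xyV] xy by simp
    qed
    show "\<forall>u\<in>V. \<forall>v\<in>V. u \<noteq> v \<and> \<not> E u v \<longrightarrow> (\<forall>x\<in>L' u. \<forall>y\<in>L' v. \<not> EH' x y)"
    proof (intro ballI impI)
      fix u v a b assume u: "u \<in> V" and v: "v \<in> V" and ne: "u \<noteq> v \<and> \<not> E u v" and a: "a \<in> L' u" and b: "b \<in> L' v"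
      obtain x y where xy: "x \<in> L u" "y \<in> L v" "a = f x" "b = f y" using a b unfolding L'_def by blast
      have "\<not> EH x y" using cc6[OF c, rule_format, OF u v ne xy(1) xy(2)] .
      then show "\<not> EH' a b" using xy EHf LVH[OF u] LVH[OF v] by auto
    qed
    show "\<forall>u\<in>V. \<forall>v\<in>V. E u v \<longrightarrow> (\<forall>x\<in>L' u. \<forall>y\<in>L' v. \<forall>y'\<in>L' v. EH' x y \<and> EH' x y' \<longrightarrow> y = y')"
    proof (intro ballI impI)
      fix u v a b b' assume u: "u \<in> V" and v: "v \<in> V" and e: "E u v" and a: "a \<in> L' u" and b: "b \<in> L' v"
        and b': "b' \<in> L' v" and ee: "EH' a b \<and> EH' a b'"
      obtain x y y' where xy: "x \<in> L u" "y \<in> L v" "y' \<in> L v" "a = f x" "b = f y" "b' = f y'"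
        using a b b' unfolding L'_def by blast
      have "EH x y \<and> EH x y'" using ee xy EHf LVH[OF u] LVH[OF v] by auto
      then have "y = y'" using cc7[OF c, rule_format, OF u v e xy(1) xy(2) xy(3)] by blast
      then show "b = b'" using xy by simp
    qed
  qed
  have cardL: "\<And>v. v \<in> V \<Longrightarrow> card (L' v) = card (L v)"
    unfolding L'_def using inj LVH by (metis card_image inj_on_subset)
  have "has_frac_packing V L' VH' EH'" using P cov kk cardL by auto
  then obtain p' where p': "\<forall>J\<in>set_pmf p'. indep_transversal V L' VH' EH' J"
      "\<forall>v\<in>V. \<forall>x\<in>L' v. measure_pmf.prob p' {J. x \<in> J} = 1 / real (card (L' v))"
    unfolding has_frac_packing_def by blast
  define p where "p = map_pmf (\<lambda>J. {x\<in>VH. f x \<in> J}) p'"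
  show ?thesis unfolding has_frac_packing_def
  proof (intro exI[of _ p] conjI ballI)
    fix I assume "I \<in> set_pmf p"
    then obtain J where J: "J \<in> set_pmf p'" "I = {x\<in>VH. f x \<in> J}" unfolding p_def by auto
    have tJ: "indep_transversal V L' VH' EH' J" using p' J by blast
    show "indep_transversal V L VH EH I" unfolding indep_transversal_def
    proof (intro conjI ballI)
      show "I \<subseteq> VH" using J by auto
    next
      fix x y assume "x \<in> I" "y \<in> I"
      then have xy: "x \<in> VH" "y \<in> VH" "f x \<in> J" "f y \<in> J" using J by auto
      then have "\<not> EH' (f x) (f y)" using tJ unfolding indep_transversal_def by blast
      then show "\<not> EH x y" using EHf xy by blast
    next
      fix v assume v: "v \<in> V"
      have "f ` (I \<inter> L v) = J \<inter> L' v" using J LVH[OF v] unfolding L'_def by auto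
      moreover have "inj_on f (I \<inter> L v)" using inj J by (auto intro: inj_on_subset)
      ultimately have "card (I \<inter> L v) = card (J \<inter> L' v)" by (metis card_image)
      then show "card (I \<inter> L v) = 1" using tJ v unfolding indep_transversal_def by simp
    qed
  next
    fix v y assume v: "v \<in> V" and y: "y \<in> L v"
    have yVH: "y \<in> VH" using LVH[OF v] y by auto
    have "measure_pmf.prob p {I. y \<in> I} = measure_pmf.prob p' ((\<lambda>J. {x\<in>VH. f x \<in> J}) -` {I. y \<in> I})"
      unfolding p_def by (rule measure_map_pmf)
    also have "(\<lambda>J. {x\<in>VH. f x \<in> J}) -` {I. y \<in> I} = {J. f y \<in> J}" using yVH by auto
    also have "measure_pmf.prob p' {J. f y \<in> J} = 1 / real (card (L' v))"
      using p' v y unfolding L'_def by blast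
    finally show "measure_pmf.prob p {I. y \<in> I} = 1 / real (card (L v))" using cardL v by simp
  qed
qed

lemma mono_list:
  assumes g: "graph V E"
    and H: "\<forall>Lst :: 'v \<Rightarrow> nat set. (\<forall>v\<in>V. finite (Lst v) \<and> card (Lst v) = s v)
          \<longrightarrow> has_frac_packing V (lc_L Lst) (lc_V V Lst) (lc_E V E Lst)"
  shows "\<forall>Lst :: 'v \<Rightarrow> nat set. (\<forall>v\<in>V. finite (Lst v) \<and> card (Lst v) \<ge> s v)
          \<longrightarrow> has_frac_packing V (lc_L Lst) (lc_V V Lst) (lc_E V E Lst)"
  using mono_list_aux[OF g H refl] by blast

theorem mainTheorem10:
  fixes V :: "'v set" and E :: "'v \<Rightarrow> 'v \<Rightarrow> bool" and s :: "'v \<Rightarrow> nat"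
  assumes "graph V E"
  shows
    "((\<forall>(L :: 'v \<Rightarrow> 'h set) VH EH. corr_cover V E L VH EH \<and> (\<forall>v\<in>V. card (L v) = s v)
          \<longrightarrow> has_frac_packing V L VH EH)
      \<longrightarrow> (\<forall>(L :: 'v \<Rightarrow> 'h set) VH EH. corr_cover V E L VH EH \<and> (\<forall>v\<in>V. card (L v) \<ge> s v)
          \<longrightarrow> has_frac_packing V L VH EH))
   \<and> ((\<forall>Lst :: 'v \<Rightarrow> nat set. (\<forall>v\<in>V. finite (Lst v) \<and> card (Lst v) = s v)
          \<longrightarrow> has_frac_packing V (lc_L Lst) (lc_V V Lst) (lc_E V E Lst))
      \<longrightarrow> (\<forall>Lst :: 'v \<Rightarrow> nat set. (\<forall>v\<in>V. finite (Lst v) \<and> card (Lst v) \<ge> s v)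
          \<longrightarrow> has_frac_packing V (lc_L Lst) (lc_V V Lst) (lc_E V E Lst)))
   \<and> (\<forall>(L :: 'v \<Rightarrow> 'h set) VH EH. corr_cover V E L VH EH \<and> (\<forall>v\<in>V. card (L v) \<ge> chi_c_bullet V E)
          \<longrightarrow> has_frac_packing V L VH EH)"
proof (intro conjI impI)
  assume H: "\<forall>(L :: 'v \<Rightarrow> 'h set) VH EH. corr_cover V E L VH EH \<and> (\<forall>v\<in>V. card (L v) = s v)
          \<longrightarrow> has_frac_packing V L VH EH"
  show "\<forall>(L :: 'v \<Rightarrow> 'h set) VH EH. corr_cover V E L VH EH \<and> (\<forall>v\<in>V. card (L v) \<ge> s v)
          \<longrightarrow> has_frac_packing V L VH EH" by (rule mono_corr[OF assms H])
next
  assume H: "\<forall>Lst :: 'v \<Rightarrow> nat set. (\<forall>v\<in>V. finite (Lst v) \<and> card (Lst v) = s v)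
          \<longrightarrow> has_frac_packing V (lc_L Lst) (lc_V V Lst) (lc_E V E Lst)"
  show "\<forall>Lst :: 'v \<Rightarrow> nat set. (\<forall>v\<in>V. finite (Lst v) \<and> card (Lst v) \<ge> s v)
          \<longrightarrow> has_frac_packing V (lc_L Lst) (lc_V V Lst) (lc_E V E Lst)" by (rule mono_list[OF assms H])
next
  have finV: "finite V" using assms unfolding graph_def by blast
  define Q where "Q = (\<lambda>k. k \<ge> 1 \<and>
     (\<forall>(L :: 'v \<Rightarrow> nat set) VH EH. corr_cover V E L VH EH \<and> (\<forall>v\<in>V. card (L v) = k)
        \<longrightarrow> has_frac_packing V L VH EH))"
  have ex: "Q (2 * card V + 1)"
    unfolding Q_def
  proof (intro conjI allI impI)
    fix L :: "'v \<Rightarrow> nat set" and VH EH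
    assume "corr_cover V E L VH EH \<and> (\<forall>v\<in>V. card (L v) = 2 * card V + 1)"
    then show "has_frac_packing V L VH EH"
      using exists_packing[OF _ finV, of E L VH EH "2 * card V + 1"] by auto
  qed simp
  have chi: "chi_c_bullet V E = (LEAST k. Q k)" unfolding chi_c_bullet_def Q_def by simp
  have Qc: "Q (chi_c_bullet V E)" unfolding chi using ex by (rule LeastI)
  then have Hn: "\<forall>(L :: 'v \<Rightarrow> nat set) VH EH. corr_cover V E L VH EH \<and> (\<forall>v\<in>V. card (L v) = chi_c_bullet V E)
        \<longrightarrow> has_frac_packing V L VH EH" unfolding Q_def by blast
  have Pn: "\<forall>(L :: 'v \<Rightarrow> nat set) VH EH. corr_cover V E L VH EH \<and> (\<forall>v\<in>V. card (L v) \<ge> chi_c_bullet V E)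
        \<longrightarrow> has_frac_packing V L VH EH"
    by (rule mono_corr[OF assms Hn])
  show "\<forall>(L :: 'v \<Rightarrow> 'h set) VH EH. corr_cover V E L VH EH \<and> (\<forall>v\<in>V. card (L v) \<ge> chi_c_bullet V E)
          \<longrightarrow> has_frac_packing V L VH EH"
  proof (intro allI impI)
    fix L :: "'v \<Rightarrow> 'h set" and VH EH
    assume a: "corr_cover V E L VH EH \<and> (\<forall>v\<in>V. card (L v) \<ge> chi_c_bullet V E)"
    show "has_frac_packing V L VH EH"
      by (rule transfer_nat[OF _ Pn]) (use a in blast)+
  qed
qed

end
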